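(* For every integer $q'\ge2$, the network $\mathcal{N}_2$ (with parameter $q'$) has a $3$-dimensional VLNC solution over every finite field.
   Context: Vector linear network coding: each source $v$ generates $x_v\in F^d$; an edge out of a source $v$ carries $Ax_v$ for a $d\times d$ matrix $A$ over $F$; an edge out of an intermediate node carries $\sum A_{e',e}y_{e'}$ over the edges $e'$ entering that node; a terminal computes vectors $\sum B_ey_e$ over its incoming edges; a $d$-dimensional VLNC solution over $F$ is such a code with which every terminal computes each demanded message for all message choices. The Char-$q$-$s$ network (integer $q\ge2$): sources $s,x_1,\dots,x_{q+2}$; intermediate nodes $m_1,\dots,m_{q+3},n_1,\dots,n_{q+3}$; terminals $r_1,\dots,r_{q+3}$; edges: $(x_1,m_i)$ for $1\le i\le q+1$; $(s,m_1)$ and $(s,m_i)$ for $4\le i\le q+3$; $(x_i,m_j)$ for $2\le i,j\le q+2$, $i\ne j$; $(x_i,m_{q+3})$ for $1\le i\le q+2$; $e_i=(m_i,n_i)$ for $1\le i\le q+3$; $(n_i,r_i)$ for $1\le i\le q+2$; $(n_{q+3},r_i)$ and $(n_i,r_{q+3})$ for $1\le i\le q+2$; $(x_i,r_1)$ for $2\le i\le q+1$; $(x_1,r_{q+2})$; $(s,r_2)$; $(s,r_3)$. Demands: $r_1$ demands $x_{q+2}$; $r_i$ demands $x_i$ for $2\le i\le q+2$; $r_{q+3}$ demands $x_1$; no terminal demands $s$. The generalized M-network $\mathcal{M}_3$: sources in three groups $G_1=(\bar a,\bar b,\bar c)$, $G_2=(\bar r,\bar s,\bar w)$, $G_3=(\bar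 x,\bar y,\bar z)$; intermediate nodes $\bar u_1,\bar u_2,\bar u_3,\bar v_1,\dots,\bar v_5$; edges from each source of $G_i$ to $\bar u_i$, edges $(\bar u_i,\bar v_i),(\bar u_i,\bar v_4),(\bar u_i,\bar v_5)$ for $i=1,2,3$, and $(\bar v_i,\bar t_j)$ for $1\le i\le5$, $1\le j\le27$; terminals $\bar t_1,\dots,\bar t_{27}$, where $\bar t_j$ demands the $j$-th triple in the lexicographic order of $G_1\times G_2\times G_3$ (e.g. $\bar t_1$: $\bar a,\bar r,\bar x$; $\bar t_2$: $\bar a,\bar r,\bar y$; $\bar t_4$: $\bar a,\bar s,\bar x$; $\bar t_{25}$: $\bar c,\bar w,\bar x$; $\bar t_{27}$: $\bar c,\bar w,\bar z$). The network $\mathcal{N}_2$ (integer $q'\ge2$) is obtained from the disjoint union of $\mathcal{M}_3$ and a copy of the Char-$q'$-$s$ network (nodes renamed $\bar m_i,\bar n_i$, terminals $\rho_i$, edges $\bar e_i=(\bar m_i,\bar n_i)$, sources $x_i$ renamed $\bar x_i$ for $2\le i\le q'+2$) by identifying $x_1$ with $\bar a$ and $s$ with $\bar x$ (so $\rho_{q'+3}$ demands $\bar a$), and adding the edges: $(\bar w,\bar t_j)$ for $j\in\{7,8,9,16,17,18\}$; $(\bar c,\bar t_j)$ for $19\le j\le24$; $(\bar a,\bar t_{25})$; $(\bar y,\bar t_{26})$; $(\bar n_1,\bar t_{25})$. All other demands are unchanged. *)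

theory Defs
  imports "HOL-Analysis.Analysis" "HOL-Library.Numeral_Type"
begin

text \<open>Messages are vectors
in F^d, represented as 'a^'d with CARD('d) = d; coding coefficients are d x d
matrices 'a^'d^'d.\<close>

definition in_edges :: "('v \<times> 'v) set \<Rightarrow> 'v \<Rightarrow> ('v \<times> 'v) set" where
  "in_edges E v = {e \<in> E. snd e = v}"

text \<open>As: matrix A_e on an edge e out of a source; Ai e' e: coefficient matrix
A_{e',e} for an edge e out of an intermediate node and an incoming edge e' of that node;
B t w e: the decoding matrix B_e used by terminal t to compute the demanded message w.
The edge symbols y are any values consistent with the local coding equations
(for an acyclic network they are uniquely determined by the messages x).\<close>

definition vlnc_solution ::
  "('v \<times> 'v) set \<Rightarrow> 'v set \<Rightarrow> 'v set \<Rightarrow> ('v \<Rightarrow> 'v set) \<Rightarrow>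
   ('v \<times> 'v \<Rightarrow> 'a::field^'d^'d) \<Rightarrow> ('v \<times> 'v \<Rightarrow> 'v \<times> 'v \<Rightarrow> 'a^'d^'d) \<Rightarrow>
   ('v \<Rightarrow> 'v \<Rightarrow> 'v \<times> 'v \<Rightarrow> 'a^'d^'d) \<Rightarrow> bool" where
  "vlnc_solution E S T D As Ai B \<longleftrightarrow>
    (\<forall>(x :: 'v \<Rightarrow> 'a^'d) (y :: 'v \<times> 'v \<Rightarrow> 'a^'d).
      ((\<forall>e\<in>E. fst e \<in> S \<longrightarrow> y e = As e *v x (fst e)) \<and>
       (\<forall>e\<in>E. fst e \<notin> S \<longrightarrow> y e = (\<Sum>e'\<in>in_edges E (fst e). Ai e' e *v y e')))
      \<longrightarrow> (\<forall>t\<in>T. \<forall>w\<in>D t. (\<Sum>e\<in>in_edges E t. B t w e *v y e) = x w))"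

definition has_vlnc_solution ::
  "('v \<times> 'v) set \<Rightarrow> 'v set \<Rightarrow> 'v set \<Rightarrow> ('v \<Rightarrow> 'v set) \<Rightarrow>
   'a::field itself \<Rightarrow> 'd::finite itself \<Rightarrow> bool" where
  "has_vlnc_solution E S T D _ _ \<longleftrightarrow>
    (\<exists>(As :: 'v \<times> 'v \<Rightarrow> 'a^'d^'d) Ai B. vlnc_solution E S T D As Ai B)"

text \<open>Nodes: Na..Nz are the sources a,b,c,r,s,w,x,y,z of M_3 (a = x_1 and
x = s of the Char copy); Nu i, Nv i, Nt j are u_i, v_i, t_j of M_3;
Nxc i are the Char sources x_i (2 \<le> i \<le> q'+2); Nm i, Nn i, Nrho i are the
Char nodes m_i, n_i and terminals rho_i.\<close>

datatype node = Na | Nb | Nc | Nr | Ns | Nw | Nx | Ny | Nz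
  | Nu nat | Nv nat | Nt nat | Nxc nat | Nm nat | Nn nat | Nrho nat

definition grp :: "nat \<Rightarrow> node list" where
  "grp i = (if i = 1 then [Na, Nb, Nc] else if i = 2 then [Nr, Ns, Nw] else [Nx, Ny, Nz])"

text \<open>Char source x_i after identification (x_1 = a).\<close>
definition chx :: "nat \<Rightarrow> node" where
  "chx i = (if i = 1 then Na else Nxc i)"

definition M3_edges :: "(node \<times> node) set" where
  "M3_edges =
     {(g, Nu i) | g i. i \<in> {1..3} \<and> g \<in> set (grp i)}
   \<union> {(Nu i, Nv i) | i. i \<in> {1..3}}
   \<union> {(Nu i, Nv 4) | i. i \<in> {1..3}}
   \<union> {(Nu i, Nv 5) | i. i \<in> {1..3}}
   \<union> {(Nv i, Nt j) | i j. i \<in> {1..5} \<and> j \<in> {1..27}}"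

text \<open>The Char-q-s network with s := Nx and x_1 := Na.\<close>
definition Char_edges :: "nat \<Rightarrow> (node \<times> node) set" where
  "Char_edges q =
     {(chx 1, Nm i) | i. i \<in> {1..q+1}}
   \<union> {(Nx, Nm 1)} \<union> {(Nx, Nm i) | i. i \<in> {4..q+3}}
   \<union> {(chx i, Nm j) | i j. i \<in> {2..q+2} \<and> j \<in> {2..q+2} \<and> i \<noteq> j}
   \<union> {(chx i, Nm (q+3)) | i. i \<in> {1..q+2}}
   \<union> {(Nm i, Nn i) | i. i \<in> {1..q+3}}
   \<union> {(Nn i, Nrho i) | i. i \<in> {1..q+2}}
   \<union> {(Nn (q+3), Nrho i) | i. i \<in> {1..q+2}}
   \<union> {(Nn i, Nrho (q+3)) | i. i \<in> {1..q+2}}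
   \<union> {(chx i, Nrho 1) | i. i \<in> {2..q+1}}
   \<union> {(chx 1, Nrho (q+2))}
   \<union> {(Nx, Nrho 2), (Nx, Nrho 3)}"

definition N2_edges :: "nat \<Rightarrow> (node \<times> node) set" where
  "N2_edges q = M3_edges \<union> Char_edges q
   \<union> {(Nw, Nt j) | j. j \<in> {7,8,9,16,17,18}}
   \<union> {(Nc, Nt j) | j. j \<in> {19..24}}
   \<union> {(Na, Nt 25), (Ny, Nt 26), (Nn 1, Nt 25)}"

definition N2_sources :: "nat \<Rightarrow> node set" where
  "N2_sources q = {Na, Nb, Nc, Nr, Ns, Nw, Nx, Ny, Nz} \<union> {Nxc i | i. i \<in> {2..q+2}}"

definition N2_terminals :: "nat \<Rightarrow> node set" where
  "N2_terminals q = {Nt j | j. j \<in> {1..27}} \<union> {Nrho i | i. i \<in> {1..q+3}}"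

text \<open>t_j demands the j-th triple (lexicographic order) of G_1 x G_2 x G_3.\<close>
definition N2_demands :: "nat \<Rightarrow> node \<Rightarrow> node set" where
  "N2_demands q v = (case v of
      Nt j \<Rightarrow> (if j \<in> {1..27} then
                 {grp 1 ! ((j - 1) div 9), grp 2 ! (((j - 1) div 3) mod 3), grp 3 ! ((j - 1) mod 3)}
               else {})
    | Nrho i \<Rightarrow> (if i = 1 then {chx (q+2)}
                 else if 2 \<le> i \<and> i \<le> q+2 then {chx i}
                 else if i = q+3 then {Na} else {})
    | _ \<Rightarrow> {})"

end

theory Submission
  imports Defs
begin


lemma neg_mat_mult: "(- mat 1) *v (v::'a::field^3) = - v"
proof -
  have "(- mat 1) *v v = - (mat 1 *v v)" 
    by (simp add: vec_eq_iff matrix_vector_mult_def sum_negf[symmetric])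
  then show ?thesis by simp
qed

lemma fin1: "finite {(g, Nu i) | g i. i \<in> {1..3} \<and> g \<in> set (grp i)}"
proof -
  have "{(g, Nu i) | g i. i \<in> {1..3} \<and> g \<in> set (grp i)} \<subseteq> {Na, Nb, Nc, Nr, Ns, Nw, Nx, Ny, Nz} \<times> Nu ` {1..3}"
    by (auto simp: grp_def split: if_splits)
  then show ?thesis by (rule finite_subset) simp
qed

lemma finE: "finite (N2_edges q)"
proof -
  have f3: "finite {(chx i, Nm j) | i j. i \<in> {2..q+2} \<and> j \<in> {2..q+2} \<and> i \<noteq> j}"
  proof -
    have "{(chx i, Nm j) | i j. i \<in> {2..q+2} \<and> j \<in> {2..q+2} \<and> i \<noteq> j} \<subseteq> (\<lambda>(i,j). (chx i, Nm j)) ` ({2..q+2} \<times> {2..q+2})"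
      by auto
    then show ?thesis by (rule finite_subset) simp
  qed
  have f5: "finite {(Nv i, Nt j) | i j. i \<in> {1..5} \<and> j \<in> {1..27}}"
  proof -
    have "{(Nv i, Nt j) | i j. i \<in> {1..5} \<and> j \<in> {1..27}} \<subseteq> (\<lambda>(i,j). (Nv i, Nt j)) ` ({1..5} \<times> {1..27})"
      by auto
    then show ?thesis by (rule finite_subset) simp
  qed
  show ?thesis
    unfolding N2_edges_def M3_edges_def Char_edges_def
    using fin1 f3 f5 by (simp add: finite_image_set finite_image_set2)
qed



definition sel :: "3 \<Rightarrow> 3 \<Rightarrow> 'a::field^3^3" where
  "sel r c = (\<chi> i j. if i = r \<and> j = c then 1 else 0)"

lemma ifmul: "(if P then 1 else 0) * (a::'a::field) = (if P then a else 0)" by simp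

lemma sel_mult: "sel r c *v v = (\<chi> i. if i = r then v $ c else 0)"
  unfolding sel_def vec_eq_iff matrix_vector_mult_def
  by (auto simp: ifmul sum.delta)

fun pos :: "node \<Rightarrow> 3" where
  "pos Na = 1" | "pos Nb = 2" | "pos Nc = 3"
| "pos Nr = 1" | "pos Ns = 2" | "pos Nw = 3"
| "pos Nx = 1" | "pos Ny = 2" | "pos Nz = 3" | "pos _ = 1"

fun grpof :: "node \<Rightarrow> nat" where
  "grpof Na = 1" | "grpof Nb = 1" | "grpof Nc = 1"
| "grpof Nr = 2" | "grpof Ns = 2" | "grpof Nw = 2"
| "grpof Nx = 3" | "grpof Ny = 3" | "grpof Nz = 3" | "grpof _ = 0"

definition gi :: "nat \<Rightarrow> 3" where
  "gi i = (if i = 1 then 1 else if i = 2 then 2 else 3)"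

definition dix :: "nat \<Rightarrow> nat \<Rightarrow> nat" where
  "dix j i = (if i = 1 then (j - 1) div 9 else if i = 2 then ((j - 1) div 3) mod 3 else (j - 1) mod 3)"

definition dem :: "nat \<Rightarrow> nat \<Rightarrow> node" where
  "dem j i = grp i ! dix j i"

definition Kset :: "nat \<Rightarrow> nat \<Rightarrow> nat set" where
  "Kset q k = (if k = 1 then {1} else if k \<le> q+1 then {1..q+2} - {k}
     else if k = q+2 then {2..q+1} else if k = q+3 then {1..q+2} else {})"

definition ck :: "node \<Rightarrow> 3" where
  "ck v = (case v of Nv k \<Rightarrow> if k = 4 then 2 else if k = 5 then 3 else 1 | _ \<Rightarrow> 1)"

definition Aic :: "nat \<Rightarrow> node \<times> node \<Rightarrow> node \<times> node \<Rightarrow> 'a::field^3^3" where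
  "Aic q e' e = (case fst e of
     Nu i \<Rightarrow> if e' \<in> (\<lambda>g. (g, Nu i)) ` set (grp i) then sel (pos (fst e')) (ck (snd e)) else 0
   | Nv k \<Rightarrow> (case fst e' of Nu i \<Rightarrow>
        if k \<le> 3 then (if i = k then mat 1 else 0)
        else if i \<in> {1,2,3} then (case snd e of Nt j \<Rightarrow> sel (gi i) (pos (dem j i)) | _ \<Rightarrow> 0) else 0
      | _ \<Rightarrow> 0)
   | Nm k \<Rightarrow> if fst e' \<in> chx ` Kset q k then mat 1 else 0
   | Nn k \<Rightarrow> if fst e' = Nm k then mat 1 else 0
   | _ \<Rightarrow> 0)"

definition Bc :: "nat \<Rightarrow> node \<Rightarrow> node \<Rightarrow> node \<times> node \<Rightarrow> 'a::field^3^3" where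
  "Bc q t w e = (case t of
     Nt j \<Rightarrow> (case fst e of Nv k \<Rightarrow> if k = grpof w then sel 1 (pos w)
          else if k = 4 then sel 2 (gi (grpof w)) else if k = 5 then sel 3 (gi (grpof w)) else 0
        | _ \<Rightarrow> 0)
   | Nrho i \<Rightarrow> (if i = 1 then (case fst e of Nn k \<Rightarrow> if k = q+3 then mat 1 else if k = 1 then - mat 1 else 0
                   | Nxc k \<Rightarrow> if k \<in> {2..q+1} then - mat 1 else 0 | _ \<Rightarrow> 0)
       else if i \<le> q+2 then (case fst e of Nn k \<Rightarrow> if k = q+3 then mat 1 else if k = i then - mat 1 else 0
                   | Na \<Rightarrow> if i = q+2 then - mat 1 else 0 | _ \<Rightarrow> 0)
       else (case fst e of Nn k \<Rightarrow> if k = 1 then mat 1 else 0 | _ \<Rightarrow> 0))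
   | _ \<Rightarrow> 0)"

lemma mem_gu: "i \<in> {1..3} \<Longrightarrow> g \<in> set (grp i) \<Longrightarrow> (g, Nu i) \<in> N2_edges q"
  by (auto simp: N2_edges_def M3_edges_def)
lemma mem_uv: "i \<in> {1..3} \<Longrightarrow> k = i \<or> k = 4 \<or> k = 5 \<Longrightarrow> (Nu i, Nv k) \<in> N2_edges q"
  by (auto simp: N2_edges_def M3_edges_def)
lemma mem_vt: "k \<in> {1..5} \<Longrightarrow> j \<in> {1..27} \<Longrightarrow> (Nv k, Nt j) \<in> N2_edges q"
  by (auto simp: N2_edges_def M3_edges_def)
lemma mem_mn: "k \<in> {1..q+3} \<Longrightarrow> (Nm k, Nn k) \<in> N2_edges q"
  by (auto simp: N2_edges_def Char_edges_def)
lemma mem_nrho: "i \<in> {1..q+2} \<Longrightarrow> (Nn i, Nrho i) \<in> N2_edges q"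
  by (auto simp: N2_edges_def Char_edges_def)
lemma mem_nrho2: "i \<in> {1..q+2} \<Longrightarrow> (Nn (q+3), Nrho i) \<in> N2_edges q"
  by (auto simp: N2_edges_def Char_edges_def)
lemma mem_nrho3: "i \<in> {1..q+2} \<Longrightarrow> (Nn i, Nrho (q+3)) \<in> N2_edges q"
  by (auto simp: N2_edges_def Char_edges_def)
lemma mem_xrho: "k \<in> {2..q+1} \<Longrightarrow> (Nxc k, Nrho 1) \<in> N2_edges q"
proof -
  assume "k \<in> {2..q+1}"
  then have "(chx k, Nrho 1) \<in> Char_edges q" by (auto simp: Char_edges_def)
  moreover have "chx k = Nxc k" using \<open>k \<in> {2..q+1}\<close> by (simp add: chx_def)
  ultimately show ?thesis unfolding N2_edges_def by simp
qed
lemma mem_arho: "(Na, Nrho (q+2)) \<in> N2_edges q"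
proof -
  have "(chx 1, Nrho (q+2)) \<in> Char_edges q" by (auto simp: Char_edges_def)
  then show ?thesis unfolding N2_edges_def by (simp add: chx_def)
qed
lemma mem_xm: "k \<in> {1..q+3} \<Longrightarrow> i \<in> Kset q k \<Longrightarrow> (chx i, Nm k) \<in> N2_edges q"
proof -
  assume k: "k \<in> {1..q+3}" and i: "i \<in> Kset q k"
  have "(chx i, Nm k) \<in> Char_edges q"
  proof (cases "k = 1")
    case True then show ?thesis using i unfolding Char_edges_def Kset_def by auto
  next
    case k1: False
    show ?thesis
    proof (cases "k \<le> q+1")
      case True
      then show ?thesis using i k k1 unfolding Char_edges_def Kset_def
        by (cases "i = 1") auto
    next
      case False
      then have "k = q+2 \<or> k = q+3" using k by auto
      then show ?thesis using i k k1 False unfolding Char_edges_def Kset_def by auto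
    qed
  qed
  then show ?thesis unfolding N2_edges_def by simp
qed

lemma Kset_sub: "Kset q k \<subseteq> {1..q+2}"
  unfolding Kset_def by auto

lemma chx_src: "i \<in> {1..q+2} \<Longrightarrow> chx i \<in> N2_sources q"
  unfolding chx_def N2_sources_def by auto

lemma inj_chx: "inj chx"
  unfolding inj_def chx_def by auto



lemma sumsplit: "(\<Sum>i\<in>{1..(q::nat)+2}. f i) = f 1 + f (q+2) + (\<Sum>i\<in>{2..q+1}. (f i :: 'b::comm_monoid_add))"
proof -
  have "{1..q+2} = insert 1 (insert (q+2) {2..q+1})" by auto
  then show ?thesis by (simp add: add.assoc)
qed

lemma sum_ins2: "(q::nat) \<ge> 2 \<Longrightarrow> (\<Sum>e\<in>insert (Nn (q+3), Nrho 1) (insert (Nn 1, Nrho 1) ((\<lambda>k. (Nxc k, Nrho 1)) ` {2..q+1})). f e) = f (Nn (q+3), Nrho 1) + (f (Nn 1, Nrho 1) + (\<Sum>e\<in>((\<lambda>k. (Nxc k, Nrho 1)) ` {2..q+1}). (f e::'a::comm_monoid_add)))"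
  apply (subst sum.insert)
  apply simp
  apply auto[1]
  apply (subst sum.insert)
  apply auto
  done

lemma mem_xrho': "2 \<le> k \<Longrightarrow> k \<le> Suc q \<Longrightarrow> (Nxc k, Nrho (Suc 0)) \<in> N2_edges q"
  using mem_xrho[of k q] by simp

lemma mem_arho': "(Na, Nrho (Suc (Suc q))) \<in> N2_edges q"
  using mem_arho[of q] by simp

lemma sumchx: "(\<Sum>i\<in>{2..q+1}. x (chx i)) = (\<Sum>i\<in>{2..q+1}. x (Nxc i))"
  by (rule sum.cong) (auto simp: chx_def)

lemma main:
  fixes q :: nat
  assumes q2: "q \<ge> 2"
  shows "vlnc_solution (N2_edges q) (N2_sources q) (N2_terminals q) (N2_demands q)
           (\<lambda>e. mat 1 :: 'a::field^3^3) (Aic q) (Bc q)"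
  unfolding vlnc_solution_def
proof (intro allI impI)
  fix x :: "node \<Rightarrow> 'a^3" and y :: "node \<times> node \<Rightarrow> 'a^3"
  let ?E = "N2_edges q"
  let ?S = "N2_sources q"
  assume H: "(\<forall>e\<in>?E. fst e \<in> ?S \<longrightarrow> y e = mat 1 *v x (fst e)) \<and>
       (\<forall>e\<in>?E. fst e \<notin> ?S \<longrightarrow> y e = (\<Sum>e'\<in>in_edges ?E (fst e). Aic q e' e *v y e'))"
  have src: "\<And>e. e \<in> ?E \<Longrightarrow> fst e \<in> ?S \<Longrightarrow> y e = x (fst e)" using H by simp
  have mid: "\<And>e. e \<in> ?E \<Longrightarrow> fst e \<notin> ?S \<Longrightarrow> y e = (\<Sum>e'\<in>in_edges ?E (fst e). Aic q e' e *v y e')"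
    using H by blast
  have red: "\<And>T v (f :: node \<times> node \<Rightarrow> 'a^3). T \<subseteq> in_edges ?E v \<Longrightarrow> (\<And>e'. e' \<in> in_edges ?E v \<Longrightarrow> e' \<notin> T \<Longrightarrow> f e' = 0)
       \<Longrightarrow> sum f (in_edges ?E v) = sum f T"
  proof -
    fix T v and f :: "node \<times> node \<Rightarrow> 'a^3"
    assume a: "T \<subseteq> in_edges ?E v" "\<And>e'. e' \<in> in_edges ?E v \<Longrightarrow> e' \<notin> T \<Longrightarrow> f e' = 0"
    have "finite (in_edges ?E v)" using finE[of q] unfolding in_edges_def by simp
    then show "sum f (in_edges ?E v) = sum f T" using a by (intro sum.mono_neutral_right) auto
  qed
  have inE: "\<And>e v. e \<in> in_edges ?E v \<longleftrightarrow> e \<in> ?E \<and> snd e = v" unfolding in_edges_def by simp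

  have yu: "y (Nu i, Nv k) = (\<Sum>g\<in>set (grp i). sel (pos g) (ck (Nv k)) *v x g)"
    if i: "i \<in> {1..3}" and k: "k = i \<or> k = 4 \<or> k = 5" for i k
  proof -
    let ?T = "(\<lambda>g. (g, Nu i)) ` set (grp i)"
    have e: "(Nu i, Nv k) \<in> ?E" using mem_uv[OF i k] .
    have "y (Nu i, Nv k) = (\<Sum>e'\<in>in_edges ?E (Nu i). Aic q e' (Nu i, Nv k) *v y e')"
      using mid[OF e] by (simp add: N2_sources_def)
    also have "\<dots> = (\<Sum>e'\<in>?T. Aic q e' (Nu i, Nv k) *v y e')"
      by (rule red) (auto simp: inE mem_gu[OF i] Aic_def)
    also have "\<dots> = (\<Sum>g\<in>set (grp i). Aic q (g, Nu i) (Nu i, Nv k) *v y (g, Nu i))"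
      by (subst sum.reindex) (auto simp: inj_on_def)
    also have "\<dots> = (\<Sum>g\<in>set (grp i). sel (pos g) (ck (Nv k)) *v x g)"
    proof (rule sum.cong)
      fix g assume g: "g \<in> set (grp i)"
      have "g \<in> ?S" using g by (auto simp: grp_def N2_sources_def split: if_splits)
      then have "y (g, Nu i) = x g" using src[OF mem_gu[OF i g]] by simp
      then show "Aic q (g, Nu i) (Nu i, Nv k) *v y (g, Nu i) = sel (pos g) (ck (Nv k)) *v x g"
        using g by (simp add: Aic_def)
    qed simp
    finally show ?thesis .
  qed

  have yv1: "y (Nv k, Nt j) = y (Nu k, Nv k)" if k: "k \<in> {1..3}" and j: "j \<in> {1..27}" for k j
  proof -
    have e: "(Nv k, Nt j) \<in> ?E" using mem_vt k j by auto
    have "y (Nv k, Nt j) = (\<Sum>e'\<in>in_edges ?E (Nv k). Aic q e' (Nv k, Nt j) *v y e')"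
      using mid[OF e] by (simp add: N2_sources_def)
    also have "\<dots> = (\<Sum>e'\<in>{(Nu k, Nv k)}. Aic q e' (Nv k, Nt j) *v y e')"
      by (rule red) (use k in \<open>auto simp: inE mem_uv Aic_def split: node.splits\<close>)
    also have "\<dots> = y (Nu k, Nv k)" using k by (simp add: Aic_def)
    finally show ?thesis .
  qed
  have yv4: "y (Nv k, Nt j) = sel (gi 1) (pos (dem j 1)) *v y (Nu 1, Nv k)
        + sel (gi 2) (pos (dem j 2)) *v y (Nu 2, Nv k) + sel (gi 3) (pos (dem j 3)) *v y (Nu 3, Nv k)"
    if k: "k = 4 \<or> k = 5" and j: "j \<in> {1..27}" for k j
  proof -
    have e: "(Nv k, Nt j) \<in> ?E" using mem_vt k j by auto
    have "y (Nv k, Nt j) = (\<Sum>e'\<in>in_edges ?E (Nv k). Aic q e' (Nv k, Nt j) *v y e')"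
      using mid[OF e] by (simp add: N2_sources_def)
    also have "\<dots> = (\<Sum>e'\<in>{(Nu 1, Nv k), (Nu 2, Nv k), (Nu 3, Nv k)}. Aic q e' (Nv k, Nt j) *v y e')"
      by (rule red) (use k in \<open>auto simp: inE mem_uv Aic_def split: node.splits\<close>)
    also have "\<dots> = sel (gi 1) (pos (dem j 1)) *v y (Nu 1, Nv k)
        + sel (gi 2) (pos (dem j 2)) *v y (Nu 2, Nv k) + sel (gi 3) (pos (dem j 3)) *v y (Nu 3, Nv k)"
      using k by (auto simp: Aic_def)
    finally show ?thesis .
  qed

  have ym: "y (Nm k, Nn k) = (\<Sum>i\<in>Kset q k. x (chx i))" if k: "k \<in> {1..q+3}" for k
  proof -
    let ?T = "(\<lambda>i. (chx i, Nm k)) ` Kset q k"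
    have e: "(Nm k, Nn k) \<in> ?E" using mem_mn k by auto
    have "y (Nm k, Nn k) = (\<Sum>e'\<in>in_edges ?E (Nm k). Aic q e' (Nm k, Nn k) *v y e')"
      using mid[OF e] by (simp add: N2_sources_def)
    also have "\<dots> = (\<Sum>e'\<in>?T. Aic q e' (Nm k, Nn k) *v y e')"
      by (rule red) (auto simp: inE mem_xm[OF k] Aic_def)
    also have "\<dots> = (\<Sum>i\<in>Kset q k. Aic q (chx i, Nm k) (Nm k, Nn k) *v y (chx i, Nm k))"
      using inj_chx by (subst sum.reindex) (auto simp: inj_on_def inj_def)
    also have "\<dots> = (\<Sum>i\<in>Kset q k. x (chx i))"
    proof (rule sum.cong)
      fix i assume i: "i \<in> Kset q k"
      have "chx i \<in> ?S" using i Kset_sub chx_src by blast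
      then have "y (chx i, Nm k) = x (chx i)" using src[OF mem_xm[OF k i]] by simp
      then show "Aic q (chx i, Nm k) (Nm k, Nn k) *v y (chx i, Nm k) = x (chx i)"
        using i by (simp add: Aic_def)
    qed simp
    finally show ?thesis .
  qed
  have yn: "y (Nn k, t) = y (Nm k, Nn k)" if e: "(Nn k, t) \<in> ?E" and k: "k \<in> {1..q+3}" for k t
  proof -
    have "y (Nn k, t) = (\<Sum>e'\<in>in_edges ?E (Nn k). Aic q e' (Nn k, t) *v y e')"
      using mid[OF e] by (simp add: N2_sources_def)
    also have "\<dots> = (\<Sum>e'\<in>{(Nm k, Nn k)}. Aic q e' (Nn k, t) *v y e')"
      by (rule red) (auto simp: inE Aic_def mem_mn[OF k])
    also have "\<dots> = y (Nm k, Nn k)" by (simp add: Aic_def)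
    finally show ?thesis .
  qed

  have K1: "Kset q 1 = {1}" and K3: "Kset q (q+3) = {1..q+2}" and K2: "Kset q (q+2) = {2..q+1}"
    and Ki: "\<And>i. 2 \<le> i \<Longrightarrow> i \<le> q+1 \<Longrightarrow> Kset q i = {1..q+2} - {i}"
    using q2 by (auto simp: Kset_def)
  have yN3: "y (Nn (q+3), t) = (\<Sum>i\<in>{1..q+2}. x (chx i))" if "(Nn (q+3), t) \<in> ?E" for t
    using yn[OF that] ym[of "q+3"] K3 by simp
  have yN1: "y (Nn 1, t) = x Na" if "(Nn 1, t) \<in> ?E" for t
    using yn[OF that] ym[of 1] K1 by (simp add: chx_def)
  show "\<forall>t\<in>N2_terminals q. \<forall>w\<in>N2_demands q t. (\<Sum>e\<in>in_edges ?E t. Bc q t w e *v y e) = x w"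
  proof (intro ballI)
    fix t w assume t: "t \<in> N2_terminals q" and w: "w \<in> N2_demands q t"
    from t consider (T) j where "t = Nt j" "j \<in> {1..27}" | (R) i where "t = Nrho i" "i \<in> {1..q+3}"
      by (auto simp: N2_terminals_def)
    then show "(\<Sum>e\<in>in_edges ?E t. Bc q t w e *v y e) = x w"
    proof cases
      case T
      have "w = dem j 1 \<or> w = dem j 2 \<or> w = dem j 3"
        using w T by (auto simp: N2_demands_def dem_def dix_def)
      then obtain i where i: "i \<in> {1,2,3}" and wi: "w = dem j i" by blast
      have dl: "dix j i < 3" using T(2) by (auto simp: dix_def div_less_iff_less_mult)
      have gl: "length (grp i) = 3" by (simp add: grp_def)
      have wg: "w \<in> set (grp i)" using nth_mem[of "dix j i" "grp i"] dl gl by (simp add: wi dem_def)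
      have gw: "grpof w = i" using wg i by (auto simp: grp_def)
      have "(\<Sum>e\<in>in_edges ?E t. Bc q t w e *v y e)
          = (\<Sum>e\<in>{(Nv i, Nt j), (Nv 4, Nt j), (Nv 5, Nt j)}. Bc q (Nt j) w e *v y e)"
        unfolding T(1)
        by (rule red) (use i T(2) in \<open>auto simp: inE mem_vt Bc_def gw split: node.splits\<close>)
      also have "\<dots> = sel 1 (pos w) *v y (Nv i, Nt j) + sel 2 (gi i) *v y (Nv 4, Nt j)
          + sel 3 (gi i) *v y (Nv 5, Nt j)"
        using i by (auto simp: Bc_def gw add.assoc)
      also have "\<dots> = x w"
      proof -
        have dw: "dem j i = w" using wi by simp
        from i wg have "(i=1 \<and> (w=Na \<or> w=Nb \<or> w=Nc)) \<or> (i=2 \<and> (w=Nr \<or> w=Ns \<or> w=Nw))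
            \<or> (i=3 \<and> (w=Nx \<or> w=Ny \<or> w=Nz))" by (auto simp: grp_def)
        then show ?thesis using dw T(2)
          by (elim disjE conjE; simp add: yv1 yv4 yu grp_def gi_def ck_def sel_mult vec_eq_iff forall_3)
      qed
      finally show ?thesis .
    next
      case R
      consider (r1) "i = 1" | (rm) "2 \<le> i" "i \<le> q+1" | (rq2) "i = q+2" | (rq3) "i = q+3"
        using R(2) by force
      then show ?thesis
      proof cases
        case r1
        have wv: "w = Nxc (q+2)" using w R r1 by (simp add: N2_demands_def chx_def)
        let ?X = "(\<lambda>k. (Nxc k, Nrho 1)) ` {2..q+1}"
        have "(\<Sum>e\<in>in_edges ?E t. Bc q t w e *v y e)
          = (\<Sum>e\<in>insert (Nn (q+3), Nrho 1) (insert (Nn 1, Nrho 1) ?X). Bc q (Nrho 1) w e *v y e)"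
          unfolding R(1) r1
          by (rule red) (auto simp: inE mem_nrho mem_nrho2 mem_xrho mem_xrho' Bc_def split: node.splits)
        also have "\<dots> = y (Nn (q+3), Nrho 1) + (- y (Nn 1, Nrho 1)
             + (\<Sum>e\<in>?X. Bc q (Nrho 1) w e *v y e))"
          unfolding sum_ins2[OF q2] by (simp add: Bc_def neg_mat_mult)
        also have "(\<Sum>e\<in>?X. Bc q (Nrho 1) w e *v y e) = (\<Sum>k\<in>{2..q+1}. - x (Nxc k))"
          apply (subst sum.reindex)
           apply (auto simp: inj_on_def intro!: sum.cong)
          using src[OF mem_xrho] by (simp add: Bc_def neg_mat_mult N2_sources_def)
        also have "y (Nn (q+3), Nrho 1) = (\<Sum>i\<in>{1..q+2}. x (chx i))"
          by (rule yN3, rule mem_nrho2) simp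
        also have "y (Nn 1, Nrho 1) = x Na"
          by (rule yN1, rule mem_nrho) simp
        finally show ?thesis unfolding wv sumsplit[of _ q] sumchx
          by (simp add: chx_def sum_negf algebra_simps)
      next
        case rm
        have wv: "w = chx i" using w R rm by (simp add: N2_demands_def)
        have "(\<Sum>e\<in>in_edges ?E t. Bc q t w e *v y e)
          = (\<Sum>e\<in>{(Nn (q+3), Nrho i), (Nn i, Nrho i)}. Bc q (Nrho i) w e *v y e)"
          unfolding R(1)
          by (rule red) (use rm in \<open>auto simp: inE mem_nrho mem_nrho2 Bc_def split: node.splits\<close>)
        also have "\<dots> = y (Nn (q+3), Nrho i) - y (Nn i, Nrho i)"
          using rm by (simp add: Bc_def neg_mat_mult)
        also have "y (Nn (q+3), Nrho i) = (\<Sum>i\<in>{1..q+2}. x (chx i))"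
          by (rule yN3, rule mem_nrho2) (use rm in simp)
        also have "y (Nn i, Nrho i) = (\<Sum>i\<in>{1..q+2} - {i}. x (chx i))"
          using yn[OF mem_nrho, of i] ym[of i] Ki[OF rm] rm by simp
        moreover have rem: "(\<Sum>k\<in>{1..q+2}. x (chx k)) = x (chx i) + (\<Sum>k\<in>{1..q+2} - {i}. x (chx k))"
          using rm by (intro sum.remove) auto
        ultimately show ?thesis unfolding wv by (simp only: rem) simp
      next
        case rq2
        have wv: "w = chx (q+2)" using w R rq2 q2 by (simp add: N2_demands_def)
        have "(\<Sum>e\<in>in_edges ?E t. Bc q t w e *v y e)
          = (\<Sum>e\<in>{(Nn (q+3), Nrho (q+2)), (Nn (q+2), Nrho (q+2)), (Na, Nrho (q+2))}. Bc q (Nrho (q+2)) w e *v y e)"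
          unfolding R(1) rq2
          by (rule red) (use q2 in \<open>auto simp: inE mem_nrho mem_nrho2 mem_arho mem_arho' Bc_def split: node.splits\<close>)
        also have "\<dots> = y (Nn (q+3), Nrho (q+2)) - y (Nn (q+2), Nrho (q+2)) - y (Na, Nrho (q+2))"
          using q2 by (simp add: Bc_def neg_mat_mult)
        also have "y (Nn (q+3), Nrho (q+2)) = (\<Sum>i\<in>{1..q+2}. x (chx i))"
          by (rule yN3, rule mem_nrho2) simp
        also have "y (Nn (q+2), Nrho (q+2)) = (\<Sum>i\<in>{2..q+1}. x (chx i))"
          using yn[OF mem_nrho, of "q+2"] ym[of "q+2"] K2 by simp
        also have "y (Na, Nrho (q+2)) = x Na"
          using src[OF mem_arho] by (simp add: N2_sources_def)
        finally show ?thesis unfolding wv sumsplit[of _ q]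
          by (simp add: chx_def)
      next
        case rq3
        have wv: "w = Na" using w R rq3 q2 by (simp add: N2_demands_def)
        have "(\<Sum>e\<in>in_edges ?E t. Bc q t w e *v y e)
          = (\<Sum>e\<in>{(Nn 1, Nrho (q+3))}. Bc q (Nrho (q+3)) w e *v y e)"
          unfolding R(1) rq3
          by (rule red) (use q2 in \<open>auto simp: inE mem_nrho3 Bc_def split: node.splits\<close>)
        also have "\<dots> = y (Nn 1, Nrho (q+3))"
          using q2 by (simp add: Bc_def)
        also have "\<dots> = x Na"
          by (rule yN1, rule mem_nrho3) simp
        finally show ?thesis unfolding wv .
      qed
    qed
  qed
qed


theorem lemma10:
  fixes q :: nat
  assumes "q \<ge> 2"
  shows "has_vlnc_solution (N2_edges q) (N2_sources q) (N2_terminals q) (N2_demands q)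
           TYPE('a::{field,finite}) TYPE(3)"
  unfolding has_vlnc_solution_def using main[OF assms] by blast

end
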